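(* Consider a downlink system with $K$ users, $M$ transmit antennas, $N$ receive antennas per user and $d$ data streams per user. Let $\mathbf{H}_k\in\mathbb{C}^{N\times M}$ be channel matrices, $\sigma_k^2>0$ noise powers and $P_{\max}>0$, and let $\kappa \triangleq \max_k \sigma_{\max}(\mathbf{H}_k^H\mathbf{H}_k)>0$. For any receive matrices $\mathbf{U}=\{\mathbf{U}_k\}_{k=1}^K$, $\mathbf{U}_k\in\mathbb{C}^{N\times d}$, and any precoders $\mathbf{V}=\{\mathbf{V}_k\}_{k=1}^K$, $\mathbf{V}_k\in\mathbb{C}^{M\times d}$, satisfying $\sum_{k=1}^K\operatorname{Tr}(\mathbf{V}_k\mathbf{V}_k^H)\le P_{\max}$, the matrix $$\mathbf{E}_k=(\mathbf{I}-\mathbf{U}_k^H\mathbf{H}_k\mathbf{V}_k)(\mathbf{I}-\mathbf{U}_k^H\mathbf{H}_k\mathbf{V}_k)^H+\mathbf{U}_k^H\Big(\sum_{j\neq k}\mathbf{H}_k\mathbf{V}_j\mathbf{V}_j^H\mathbf{H}_k^H+\sigma_k^2\mathbf{I}\Big)\mathbf{U}_k$$ satisfies $$\lambda_{\min}(\mathbf{E}_k)\ge \frac{\sigma_k^2}{P_{\max}\kappa+\sigma_k^2}\quad\text{for all } k.$$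
   Context: $\sigma_{\max}(\cdot)$ denotes the largest singular value and $\lambda_{\min}(\cdot)$ the smallest eigenvalue of a Hermitian matrix; $\mathbf{I}$ is the $d\times d$ identity (or $N\times N$ identity inside the bracket). *)

theory Defs
  imports "Jordan_Normal_Form.Jordan_Normal_Form_Existence"
begin

definition herm :: "complex mat \<Rightarrow> complex mat" where
  "herm A = mat (dim_col A) (dim_row A) (\<lambda>(i,j). cnj (A $$ (j,i)))"

(* smallest eigenvalue of a Hermitian matrix (its eigenvalues are real) *)
definition lambda_min :: "complex mat \<Rightarrow> real" where
  "lambda_min A = Min (Re ` {e. eigenvalue A e})"

definition sigma_max :: "complex mat \<Rightarrow> real" where
  "sigma_max A = sqrt (Max (Re ` {e. eigenvalue (herm A * A) e}))"

definition mat_sum :: "nat \<Rightarrow> nat \<Rightarrow> (nat \<Rightarrow> complex mat) \<Rightarrow> nat list \<Rightarrow> complex mat" where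
  "mat_sum r c f js = foldr (\<lambda>j acc. f j + acc) js (0\<^sub>m r c)"

definition mtrace :: "complex mat \<Rightarrow> complex" where
  "mtrace A = (\<Sum>i<dim_row A. A $$ (i,i))"

end

theory Submission
  imports Defs "Jordan_Normal_Form.Spectral_Radius"
begin


definition ip :: "complex vec \<Rightarrow> complex vec \<Rightarrow> complex" where
  "ip x y = (\<Sum>i<dim_vec y. x$i * cnj (y$i))"

definition nsq :: "complex vec \<Rightarrow> real" where
  "nsq x = (\<Sum>i<dim_vec x. (cmod (x$i))\<^sup>2)"

lemma lin3: fixes c1 c2 c3 :: real shows
  "(\<Sum>i\<in>I. c1 * (a i)\<^sup>2 - c2 * f i + c3 * (b i)\<^sup>2) = c1 * (\<Sum>i\<in>I. (a i)\<^sup>2) - c2 * (\<Sum>i\<in>I. f i) + c3 * (\<Sum>i\<in>I. (b i)\<^sup>2)"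
  by (simp add: sum.distrib sum_subtractf sum_distrib_left)

lemma CS_real:
  fixes a b :: "nat \<Rightarrow> real"
  shows "(\<Sum>i\<in>I. a i * b i)\<^sup>2 \<le> (\<Sum>i\<in>I. (a i)\<^sup>2) * (\<Sum>i\<in>I. (b i)\<^sup>2)"
proof (cases "finite I")
  case False then show ?thesis by simp
next
  case fin: True
  define A where "A = (\<Sum>i\<in>I. (a i)\<^sup>2)"
  define B where "B = (\<Sum>i\<in>I. (b i)\<^sup>2)"
  define S where "S = (\<Sum>i\<in>I. a i * b i)"
  have B0: "B \<ge> 0" unfolding B_def by (simp add: sum_nonneg)
  have pt: "(a i * B - b i * S)\<^sup>2 = B*B*(a i)\<^sup>2 - 2*B*S*(a i * b i) + S*S*(b i)\<^sup>2" for i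
    by (simp add: power2_eq_square algebra_simps)
  have "0 \<le> (\<Sum>i\<in>I. (a i * B - b i * S)\<^sup>2)" by (simp add: sum_nonneg)
  also have "\<dots> = (\<Sum>i\<in>I. B*B*(a i)\<^sup>2 - 2*B*S*(a i * b i) + S*S*(b i)\<^sup>2)"
    by (simp only: pt)
  also have "\<dots> = B*B*(\<Sum>i\<in>I. (a i)\<^sup>2) - 2*B*S*(\<Sum>i\<in>I. a i * b i) + S*S*(\<Sum>i\<in>I. (b i)\<^sup>2)"
    by (rule lin3)
  also have "\<dots> = B*B*A - 2*B*S*S + S*S*B"
    by (simp only: A_def B_def S_def)
  finally have h0: "0 \<le> B*B*A - 2*B*S*S + S*S*B" .
  have h: "0 \<le> B * (A*B - S*S)"
  proof -
    have "B*B*A - 2*B*S*S + S*S*B = B * (A*B - S*S)" by (simp add: algebra_simps)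
    with h0 show ?thesis by simp
  qed
  show ?thesis
  proof (cases "B = 0")
    case True
    have "\<forall>i\<in>I. (b i)\<^sup>2 = 0" using True fin unfolding B_def
      by (subst sum_nonneg_eq_0_iff[symmetric]) auto
    then have "S = 0" unfolding S_def by simp
    then show ?thesis using True by (simp add: S_def B_def)
  next
    case False
    with B0 have "B > 0" by simp
    with h have "A*B - S*S \<ge> 0" by (simp add: zero_le_mult_iff)
    then show ?thesis by (simp add: A_def B_def S_def power2_eq_square)
  qed
qed

lemma nsq_ge0: "nsq x \<ge> 0" unfolding nsq_def by (simp add: sum_nonneg)

lemma ip_self: "ip x x = complex_of_real (nsq x)"
  unfolding ip_def nsq_def complex_norm_square[symmetric] of_real_sum ..

lemma CS: assumes "dim_vec x = dim_vec y"
  shows "(cmod (ip x y))\<^sup>2 \<le> nsq x * nsq y"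
proof -
  have "cmod (ip x y) \<le> (\<Sum>i<dim_vec y. cmod (x$i) * cmod (y$i))"
    unfolding ip_def by (rule order_trans[OF norm_sum]) (simp add: norm_mult)
  then have "(cmod (ip x y))\<^sup>2 \<le> (\<Sum>i<dim_vec y. cmod (x$i) * cmod (y$i))\<^sup>2"
    by (simp add: power_mono)
  also have "\<dots> \<le> nsq x * nsq y" unfolding nsq_def using assms CS_real by simp
  finally show ?thesis .
qed


lemma ip_add_left: "x \<in> carrier_vec n \<Longrightarrow> y \<in> carrier_vec n \<Longrightarrow> w \<in> carrier_vec n \<Longrightarrow>
  ip (x + y) w = ip x w + ip y w"
  unfolding ip_def by (simp add: sum.distrib algebra_simps)

lemma ip_minus_left: "x \<in> carrier_vec n \<Longrightarrow> y \<in> carrier_vec n \<Longrightarrow> w \<in> carrier_vec n \<Longrightarrow>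
  ip (x - y) w = ip x w - ip y w"
  unfolding ip_def by (simp add: sum_subtractf algebra_simps)

lemma ip_minus_right: "x \<in> carrier_vec n \<Longrightarrow> y \<in> carrier_vec n \<Longrightarrow> w \<in> carrier_vec n \<Longrightarrow>
  ip w (x - y) = ip w x - ip w y"
  unfolding ip_def by (simp add: sum_subtractf algebra_simps)

lemma ip_smult_left: "x \<in> carrier_vec n \<Longrightarrow> y \<in> carrier_vec n \<Longrightarrow> ip (c \<cdot>\<^sub>v x) y = c * ip x y"
  unfolding ip_def by (simp add: sum_distrib_left algebra_simps)

lemma ip_cnj: "x \<in> carrier_vec n \<Longrightarrow> y \<in> carrier_vec n \<Longrightarrow> ip y x = cnj (ip x y)"
  unfolding ip_def by (simp add: mult.commute)

lemma herm_carrier[simp]: "A \<in> carrier_mat n m \<Longrightarrow> herm A \<in> carrier_mat m n"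
  unfolding herm_def by auto

lemma herm_dims[simp]: "dim_row (herm A) = dim_col A" "dim_col (herm A) = dim_row A"
  unfolding herm_def by auto

lemma herm_index[simp]: "i < dim_col A \<Longrightarrow> j < dim_row A \<Longrightarrow> herm A $$ (i,j) = cnj (A $$ (j,i))"
  unfolding herm_def by auto

lemma herm_herm[simp]: "herm (herm A) = A"
  by (rule eq_matI) auto

lemma herm_mult: "A \<in> carrier_mat n m \<Longrightarrow> B \<in> carrier_mat m p \<Longrightarrow> herm (A * B) = herm B * herm A"
  by (rule eq_matI) (auto simp: scalar_prod_def row_def col_def mult.commute)

lemma herm_minus: "A \<in> carrier_mat n m \<Longrightarrow> B \<in> carrier_mat n m \<Longrightarrow> herm (A - B) = herm A - herm B"
  by (rule eq_matI) auto

lemma herm_add: "A \<in> carrier_mat n m \<Longrightarrow> B \<in> carrier_mat n m \<Longrightarrow> herm (A + B) = herm A + herm B"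
  by (rule eq_matI) auto

lemma herm_one[simp]: "herm (1\<^sub>m n) = 1\<^sub>m n"
  by (rule eq_matI) auto

lemma ip_adj: assumes "A \<in> carrier_mat n m" "x \<in> carrier_vec m" "y \<in> carrier_vec n"
  shows "ip (A *\<^sub>v x) y = ip x (herm A *\<^sub>v y)"
proof -
  have "ip (A *\<^sub>v x) y = (\<Sum>i<n. \<Sum>j<m. A $$ (i,j) * x $ j * cnj (y $ i))"
    using assms unfolding ip_def
    by (simp add: mult_mat_vec_def scalar_prod_def sum_distrib_right atLeast0LessThan row_def)
  also have "\<dots> = (\<Sum>j<m. \<Sum>i<n. A $$ (i,j) * x $ j * cnj (y $ i))"
    by (rule sum.swap)
  also have "\<dots> = ip x (herm A *\<^sub>v y)"
    using assms unfolding ip_def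
    by (simp add: mult_mat_vec_def scalar_prod_def sum_distrib_left atLeast0LessThan row_def algebra_simps)
  finally show ?thesis .
qed



lemma smult_mat_vec: "A \<in> carrier_mat n m \<Longrightarrow> v \<in> carrier_vec m \<Longrightarrow> (c \<cdot>\<^sub>m A) *\<^sub>v v = c \<cdot>\<^sub>v (A *\<^sub>v v)"
  by (rule eq_vecI) (auto simp: mult_mat_vec_def scalar_prod_def sum_distrib_left algebra_simps)

lemma mat_vec_zero: "A \<in> carrier_mat n m \<Longrightarrow> A *\<^sub>v 0\<^sub>v m = 0\<^sub>v n"
  by (rule eq_vecI) (auto simp: mult_mat_vec_def scalar_prod_def)

lemma Re_ip_self: "Re (ip x x) = nsq x" by (simp add: ip_self)

lemma nsq_zero: assumes "x \<in> carrier_vec n" "nsq x = 0" shows "x = 0\<^sub>v n"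
proof (rule eq_vecI)
  have "\<forall>i\<in>{..<dim_vec x}. (cmod (x$i))\<^sup>2 = 0"
    using assms(2) unfolding nsq_def by (subst sum_nonneg_eq_0_iff[symmetric]) auto
  then show "\<And>i. i < dim_vec (0\<^sub>v n) \<Longrightarrow> x $ i = 0\<^sub>v n $ i" using assms(1) by auto
qed (use assms in auto)

lemma nsq_pos: "x \<in> carrier_vec n \<Longrightarrow> x \<noteq> 0\<^sub>v n \<Longrightarrow> nsq x > 0"
  using nsq_zero nsq_ge0 by (metis less_eq_real_def)

lemma ip_AAh: assumes "A \<in> carrier_mat n m" "y \<in> carrier_vec n"
  shows "ip ((A * herm A) *\<^sub>v y) y = complex_of_real (nsq (herm A *\<^sub>v y))"
proof -
  have "ip ((A * herm A) *\<^sub>v y) y = ip (A *\<^sub>v (herm A *\<^sub>v y)) y"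
    using assms assoc_mult_mat_vec[of A n m "herm A" n y] by simp
  also have "\<dots> = ip (herm A *\<^sub>v y) (herm A *\<^sub>v y)"
  proof -
    have hA: "herm A \<in> carrier_mat m n" using assms by simp
    have "herm A *\<^sub>v y \<in> carrier_vec m" using mult_mat_vec_carrier[OF hA assms(2)] .
    then show ?thesis using assms by (subst ip_adj[of _ n m]) auto
  qed
  finally show ?thesis by (simp add: ip_self)
qed

lemma pow_add_mat: "A \<in> carrier_mat n n \<Longrightarrow> A ^\<^sub>m (a + b) = A ^\<^sub>m a * A ^\<^sub>m b"
proof (induction b)
  case 0 then show ?case by simp
next
  case (Suc b)
  have "A ^\<^sub>m (a + Suc b) = (A ^\<^sub>m a * A ^\<^sub>m b) * A" using Suc by simp
  also have "\<dots> = A ^\<^sub>m a * (A ^\<^sub>m b * A)"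
    using assoc_mult_mat[of "A ^\<^sub>m a" n n "A ^\<^sub>m b" n A n] Suc.prems by simp
  finally show ?case by simp
qed

lemma pow_comm_mat: "A \<in> carrier_mat n n \<Longrightarrow> A * A ^\<^sub>m k = A ^\<^sub>m k * A"
  using pow_add_mat[of A n 1 k] pow_add_mat[of A n k 1] by (simp add: add.commute)

lemma herm_pow: assumes "A \<in> carrier_mat n n" "herm A = A" shows "herm (A ^\<^sub>m k) = A ^\<^sub>m k"
proof (induction k)
  case 0 then show ?case using assms by simp
next
  case (Suc k)
  have "herm (A ^\<^sub>m Suc k) = herm A * herm (A ^\<^sub>m k)"
    using assms by (simp add: herm_mult[of _ n n _ n])
  also have "\<dots> = A * A ^\<^sub>m k" using Suc assms by simp
  also have "\<dots> = A ^\<^sub>m Suc k" using pow_comm_mat[OF assms(1)] by simp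
  finally show ?case .
qed

lemma pow_sq_mat: assumes "A \<in> carrier_mat n n" shows "(A * A) ^\<^sub>m k = A ^\<^sub>m (2*k)"
proof (induction k)
  case 0 then show ?case using assms by simp
next
  case (Suc k)
  have "(A * A) ^\<^sub>m Suc k = A ^\<^sub>m (2*k) * (A * A)" using Suc by simp
  also have "\<dots> = A ^\<^sub>m (2*k) * A ^\<^sub>m 2"
    using assms by (simp add: numeral_2_eq_2)
  also have "\<dots> = A ^\<^sub>m (2 * Suc k)" using pow_add_mat[OF assms, of "2*k" 2] by simp
  finally show ?case .
qed

lemma pow_smult_mat: assumes "(A::complex mat) \<in> carrier_mat n n" shows "(c \<cdot>\<^sub>m A) ^\<^sub>m k = (c ^ k) \<cdot>\<^sub>m (A ^\<^sub>m k)"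
proof (induction k)
  case 0 then show ?case using assms by (auto intro!: eq_matI)
next
  case (Suc k)
  have "(c \<cdot>\<^sub>m A) ^\<^sub>m Suc k = ((c ^ k) \<cdot>\<^sub>m (A ^\<^sub>m k)) * (c \<cdot>\<^sub>m A)" using Suc by simp
  also have "\<dots> = (c ^ Suc k) \<cdot>\<^sub>m (A ^\<^sub>m Suc k)"
  proof -
    have X: "A ^\<^sub>m k \<in> carrier_mat n n" using assms by simp
    have "((c ^ k) \<cdot>\<^sub>m (A ^\<^sub>m k)) * (c \<cdot>\<^sub>m A) = (c ^ k) \<cdot>\<^sub>m ((A ^\<^sub>m k) * (c \<cdot>\<^sub>m A))"
      by (rule mult_smult_assoc_mat[OF X smult_carrier_mat[OF assms]])
    also have "\<dots> = (c ^ k) \<cdot>\<^sub>m (c \<cdot>\<^sub>m ((A ^\<^sub>m k) * A))"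
      using X assms by (subst mult_smult_distrib[of _ n n _ n]) auto
    also have "\<dots> = (c ^ Suc k) \<cdot>\<^sub>m (A ^\<^sub>m k * A)"
      by (rule eq_matI) auto
    finally show ?thesis by simp
  qed
  finally show ?case .
qed




lemma ip_bound: assumes "X \<in> carrier_mat n n" "z \<in> carrier_vec n" "norm_bound X c"
  shows "cmod (ip (X *\<^sub>v z) z) \<le> c * (\<Sum>i<n. cmod (z$i))\<^sup>2"
proof -
  have "cmod (ip (X *\<^sub>v z) z) = cmod (\<Sum>i<n. \<Sum>j<n. X $$ (i,j) * z $ j * cnj (z $ i))"
    using assms unfolding ip_def
    by (simp add: mult_mat_vec_def scalar_prod_def sum_distrib_right atLeast0LessThan row_def)
  also have "\<dots> \<le> (\<Sum>i<n. \<Sum>j<n. cmod (X $$ (i,j) * z $ j * cnj (z $ i)))"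
    by (rule order_trans[OF norm_sum], rule sum_mono, rule norm_sum)
  also have "\<dots> \<le> (\<Sum>i<n. \<Sum>j<n. c * (cmod (z $ j) * cmod (z $ i)))"
  proof (intro sum_mono)
    fix i j assume "i \<in> {..<n}" "j \<in> {..<n}"
    then have "cmod (X $$ (i,j)) \<le> c" using assms unfolding norm_bound_def by auto
    then show "cmod (X $$ (i,j) * z $ j * cnj (z $ i)) \<le> c * (cmod (z $ j) * cmod (z $ i))"
      by (simp add: norm_mult mult_right_mono mult.assoc)
  qed
  also have "\<dots> = c * (\<Sum>i<n. cmod (z$i))\<^sup>2"
    by (simp add: power2_eq_square sum_distrib_left sum_distrib_right algebra_simps)
  finally show ?thesis .
qed

lemma KL: assumes H: "H \<in> carrier_mat N M" and z: "z \<in> carrier_vec M"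
  shows "nsq (H *\<^sub>v z) \<le> sigma_max (herm H * H) * nsq z"
proof (cases "z = 0\<^sub>v M")
  case True
  then show ?thesis using H by (simp add: mat_vec_zero nsq_def)
next
  case False
  define n where "n = nsq z"
  have n: "n > 0" using nsq_pos[OF z False] n_def by simp
  have M: "M > 0" using n z unfolding n_def nsq_def by (cases M) auto
  define G where "G = herm H * H"
  have G: "G \<in> carrier_mat M M" using H G_def by auto
  have hG: "herm G = G" using H unfolding G_def by (simp add: herm_mult[of _ M N _ M])
  define r where "r = nsq (H *\<^sub>v z) / n"
  have r0: "r \<ge> 0" using n nsq_ge0 r_def by simp
  define p where "p k = Re (ip ((G ^\<^sub>m k) *\<^sub>v z) z)" for k
  have p1: "p 1 = r * n"
  proof -
    have "ip ((G ^\<^sub>m 1) *\<^sub>v z) z = ip (herm H *\<^sub>v (H *\<^sub>v z)) z"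
      using G H z assoc_mult_mat_vec[of "herm H" M N H M z] by (simp add: G_def)
    also have "\<dots> = ip (H *\<^sub>v z) (H *\<^sub>v z)"
      using H z by (subst ip_adj[of _ M N]) auto
    finally show ?thesis using n by (simp add: p_def r_def ip_self)
  qed
  have p2: "p (2*k) \<ge> (p k)\<^sup>2 / n" for k
  proof -
    have Gk: "G ^\<^sub>m k \<in> carrier_mat M M" using G by simp
    have "ip ((G ^\<^sub>m (2*k)) *\<^sub>v z) z = ip (G ^\<^sub>m k *\<^sub>v (G ^\<^sub>m k *\<^sub>v z)) z"
      using pow_add_mat[OF G, of k k] G z assoc_mult_mat_vec[of "G ^\<^sub>m k" M M "G ^\<^sub>m k" M z] by (simp add: mult_2)
    also have "\<dots> = ip (G ^\<^sub>m k *\<^sub>v z) (G ^\<^sub>m k *\<^sub>v z)"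
      using Gk z herm_pow[OF G hG, of k] by (subst ip_adj[of _ M M]) auto
    finally have e: "p (2*k) = nsq (G ^\<^sub>m k *\<^sub>v z)" by (simp add: p_def ip_self)
    have "(p k)\<^sup>2 \<le> (cmod (ip ((G ^\<^sub>m k) *\<^sub>v z) z))\<^sup>2"
    proof -
      have "\<bar>p k\<bar> \<le> cmod (ip ((G ^\<^sub>m k) *\<^sub>v z) z)" unfolding p_def by (rule abs_Re_le_cmod)
      then have "\<bar>p k\<bar>\<^sup>2 \<le> (cmod (ip ((G ^\<^sub>m k) *\<^sub>v z) z))\<^sup>2" by (rule power_mono) simp
      then show ?thesis by simp
    qed
    also have "\<dots> \<le> nsq (G ^\<^sub>m k *\<^sub>v z) * n" unfolding n_def using Gk z by (intro CS) auto
    finally show ?thesis using n e by (simp add: field_simps)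
  qed
  have p3: "p (2^m) \<ge> r ^ (2^m) * n" for m
  proof (induction m)
    case 0 then show ?case using p1 by simp
  next
    case (Suc m)
    have "r ^ (2^Suc m) * n = (r ^ (2^m) * n)\<^sup>2 / n" using n
      by (simp add: power2_eq_square power_mult power_add field_simps)
    also have "\<dots> \<le> (p (2^m))\<^sup>2 / n"
      using Suc n r0 by (intro divide_right_mono power_mono) auto
    also have "\<dots> \<le> p (2^Suc m)" using p2[of "2^m"] by simp
    finally show ?case .
  qed
  define B where "B = G * G"
  have B: "B \<in> carrier_mat M M" using G B_def by simp
  define Ev where "Ev = Re ` {e. eigenvalue B e}"
  have sig: "sigma_max (herm H * H) = sqrt (Max Ev)"
    unfolding sigma_max_def Ev_def B_def G_def[symmetric] hG ..
  have fin: "finite Ev" using card_finite_spectrum(1)[OF B] unfolding Ev_def spectrum_def by simp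
  have ne: "Ev \<noteq> {}" using spectrum_non_empty[OF B M] unfolding Ev_def spectrum_def by simp
  have evpos: "\<mu> = complex_of_real (Re \<mu>) \<and> Re \<mu> \<ge> 0" if evm: "eigenvalue B \<mu>" for \<mu>
  proof -
    obtain v where v: "v \<in> carrier_vec M" "v \<noteq> 0\<^sub>v M" "B *\<^sub>v v = \<mu> \<cdot>\<^sub>v v"
      using evm B unfolding eigenvalue_def eigenvector_def by auto
    have nv: "nsq v > 0" using nsq_pos v by blast
    have "ip (B *\<^sub>v v) v = ip (G *\<^sub>v (G *\<^sub>v v)) v" using G v by (simp add: B_def)
    also have "\<dots> = ip (G *\<^sub>v v) (G *\<^sub>v v)" using G v hG by (subst ip_adj[of _ M M]) auto
    finally have "\<mu> * complex_of_real (nsq v) = complex_of_real (nsq (G *\<^sub>v v))"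
      using v by (simp add: ip_smult_left[of _ M] ip_self)
    then have "\<mu> = complex_of_real (nsq (G *\<^sub>v v) / nsq v)" using nv
      by (simp add: field_simps)
    then show ?thesis using nsq_ge0 nv by simp
  qed
  have Ev0: "e \<ge> 0" if "e \<in> Ev" for e using that evpos unfolding Ev_def by auto
  have "r\<^sup>2 \<le> Max Ev"
  proof (rule ccontr)
    assume "\<not> r\<^sup>2 \<le> Max Ev"
    then have lt: "Max Ev < r\<^sup>2" by simp
    have m0: "Max Ev \<ge> 0" using fin ne Ev0 by (meson Max_in)
    define t where "t = (Max Ev + r\<^sup>2) / 2"
    have t0: "t > 0" and tm: "Max Ev < t" and tr: "t < r\<^sup>2" using lt m0 by (auto simp: t_def)
    define C where "C = complex_of_real (1/t) \<cdot>\<^sub>m B"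
    have C: "C \<in> carrier_mat M M" using B C_def by simp
    have Cv: "C *\<^sub>v v = complex_of_real (1/t) \<cdot>\<^sub>v (B *\<^sub>v v)" if "v \<in> carrier_vec M" for v
      unfolding C_def using B that by (rule smult_mat_vec)
    have "spectral_radius C < 1"
    proof -
      obtain l where l: "l \<in> spectrum C" "spectral_radius C = norm l"
        using spectral_radius_mem_max(1)[OF C M] by auto
      obtain v where v: "v \<in> carrier_vec M" "v \<noteq> 0\<^sub>v M" "C *\<^sub>v v = l \<cdot>\<^sub>v v"
        using l(1) C unfolding spectrum_def eigenvalue_def eigenvector_def by auto
      have "B *\<^sub>v v = complex_of_real t \<cdot>\<^sub>v (C *\<^sub>v v)"
        using Cv[OF v(1)] t0 B v(1) by (auto intro!: eq_vecI)
      then have "B *\<^sub>v v = (complex_of_real t * l) \<cdot>\<^sub>v v" using v(3) by (simp add: smult_smult_assoc)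
      then have ev: "eigenvalue B (complex_of_real t * l)"
        using v B unfolding eigenvalue_def eigenvector_def by auto
      from evpos[OF ev] have re: "complex_of_real t * l = complex_of_real (Re (complex_of_real t * l))"
        and rge: "Re (complex_of_real t * l) \<ge> 0" by auto
      have "Re (complex_of_real t * l) \<in> Ev" using ev unfolding Ev_def by (intro imageI) simp
      then have "Re (complex_of_real t * l) \<le> Max Ev" using fin by simp
      then have "Re (complex_of_real t * l) < t" using tm by simp
      moreover have "norm l = Re (complex_of_real t * l) / t"
      proof -
        have "norm (complex_of_real t * l) = Re (complex_of_real t * l)"
          using re rge by (metis norm_of_real abs_of_nonneg)
        then show ?thesis using t0 by (simp add: norm_mult)
      qed
      ultimately show ?thesis using l(2) t0 by simp
    qed
    then obtain c where c: "\<And>k. norm_bound (C ^\<^sub>m k) c"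
      using spectral_radius_jnf_norm_bound_less_1_upper_triangular[OF C] by auto
    define Z where "Z = (\<Sum>i<M. cmod (z$i))\<^sup>2"
    define q where "q = r\<^sup>2 / t"
    have q1: "q > 1" using tr t0 by (simp add: q_def)
    have bnd: "q ^ (2^m) \<le> c * Z / n" for m
    proof -
      define k where "k = (2::nat)^m"
      have Ck: "(C ^\<^sub>m k) *\<^sub>v z = complex_of_real ((1/t)^k) \<cdot>\<^sub>v ((B ^\<^sub>m k) *\<^sub>v z)"
        unfolding C_def pow_smult_mat[OF B] using B z by (simp add: smult_mat_vec[of _ M M])
      have "ip ((C ^\<^sub>m k) *\<^sub>v z) z = complex_of_real ((1/t)^k) * ip ((B ^\<^sub>m k) *\<^sub>v z) z"
        unfolding Ck
        by (rule ip_smult_left[of _ M]) (use mult_mat_vec_carrier[OF pow_carrier_mat[OF B] z] z in auto)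
      then have "complex_of_real (t^k) * ip ((C ^\<^sub>m k) *\<^sub>v z) z = complex_of_real (t^k * (1/t)^k) * ip ((B ^\<^sub>m k) *\<^sub>v z) z"
        by (simp only: of_real_mult mult.assoc)
      also have "t^k * (1/t)^k = 1" using t0 by (simp add: power_one_over)
      finally have "ip ((B ^\<^sub>m k) *\<^sub>v z) z = complex_of_real (t^k) * ip ((C ^\<^sub>m k) *\<^sub>v z) z" by simp
      then have "Re (ip ((B ^\<^sub>m k) *\<^sub>v z) z) = t^k * Re (ip ((C ^\<^sub>m k) *\<^sub>v z) z)"
        by simp
      also have "\<dots> \<le> t^k * cmod (ip ((C ^\<^sub>m k) *\<^sub>v z) z)"
        using t0 by (intro mult_left_mono complex_Re_le_cmod) auto
      also have "\<dots> \<le> t^k * (c * Z)"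
        unfolding Z_def using t0 by (intro mult_left_mono ip_bound[OF _ z c]) (use C in auto)
      finally have A1: "Re (ip ((B ^\<^sub>m k) *\<^sub>v z) z) \<le> t^k * (c * Z)" .
      have "Re (ip ((B ^\<^sub>m k) *\<^sub>v z) z) = p (2^Suc m)"
        unfolding p_def B_def pow_sq_mat[OF G] k_def by simp
      then have "r ^ (2^Suc m) * n \<le> t^k * (c * Z)" using p3[of "Suc m"] A1 by simp
      moreover have "r ^ (2^Suc m) = (r\<^sup>2)^k" unfolding k_def by (simp add: power_mult[symmetric] mult.commute)
      ultimately have "(r\<^sup>2)^k * n \<le> t^k * (c * Z)" by simp
      then show ?thesis unfolding q_def k_def[symmetric] using t0 n
        by (simp add: power_divide field_simps)
    qed
    obtain NN where NN: "c * Z / n < q ^ NN" using real_arch_pow[OF q1] by auto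
    have "q ^ NN \<le> q ^ (2^NN)" using q1 by (intro power_increasing) (auto intro: less_imp_le less_exp)
    then show False using bnd[of NN] NN by simp
  qed
  then have "r \<le> sqrt (Max Ev)" using r0 by (simp add: real_le_rsqrt)
  then have "r * n \<le> sqrt (Max Ev) * n" using n by (simp add: mult_right_mono)
  then show ?thesis unfolding sig n_def[symmetric] using n by (simp add: r_def)
qed



lemma nsq_col: "V \<in> carrier_mat M d \<Longrightarrow> i < d \<Longrightarrow> nsq (col V i) = (\<Sum>j<M. (cmod (V $$ (j,i)))\<^sup>2)"
  unfolding nsq_def by simp

lemma tr_eq: assumes V: "V \<in> carrier_mat M d"
  shows "Re (mtrace (V * herm V)) = (\<Sum>i<d. \<Sum>j<M. (cmod (V $$ (j,i)))\<^sup>2)"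
proof -
  have "(V * herm V) $$ (j,j) = complex_of_real (\<Sum>i<d. (cmod (V $$ (j,i)))\<^sup>2)" if "j < M" for j
    using V that unfolding of_real_sum complex_norm_square
    by (simp add: scalar_prod_def row_def col_def atLeast0LessThan)
  then have "Re (mtrace (V * herm V)) = (\<Sum>j<M. \<Sum>i<d. (cmod (V $$ (j,i)))\<^sup>2)"
    using V unfolding mtrace_def by (simp add: Re_sum)
  also have "\<dots> = (\<Sum>i<d. \<Sum>j<M. (cmod (V $$ (j,i)))\<^sup>2)" by (rule sum.swap)
  finally show ?thesis .
qed

lemma tr_nonneg: "V \<in> carrier_mat M d \<Longrightarrow> Re (mtrace (V * herm V)) \<ge> 0"
  using tr_eq by (simp add: sum_nonneg)

lemma trace_bound: assumes V: "V \<in> carrier_mat M d" and z: "z \<in> carrier_vec M"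
  shows "nsq (herm V *\<^sub>v z) \<le> Re (mtrace (V * herm V)) * nsq z"
proof -
  have e: "(herm V *\<^sub>v z) $ i = ip z (col V i)" if "i < d" for i
    using V z that unfolding ip_def
    by (simp add: mult_mat_vec_def scalar_prod_def row_def atLeast0LessThan mult.commute)
  have "nsq (herm V *\<^sub>v z) = (\<Sum>i<d. (cmod (ip z (col V i)))\<^sup>2)"
    using V e unfolding nsq_def by simp
  also have "\<dots> \<le> (\<Sum>i<d. nsq z * nsq (col V i))"
    using V z by (intro sum_mono CS) auto
  also have "\<dots> = nsq z * (\<Sum>i<d. \<Sum>j<M. (cmod (V $$ (j,i)))\<^sup>2)"
    using V by (simp add: nsq_col sum_distrib_left)
  also have "\<dots> = Re (mtrace (V * herm V)) * nsq z" using tr_eq[OF V] by simp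
  finally show ?thesis .
qed

lemma mat_sum_cons: "mat_sum r c f (j # js) = f j + mat_sum r c f js"
  unfolding mat_sum_def by simp

lemma mat_sum_carrier: "(\<And>j. j \<in> set js \<Longrightarrow> f j \<in> carrier_mat r c) \<Longrightarrow> mat_sum r c f js \<in> carrier_mat r c"
  by (induction js) (auto simp: mat_sum_def)

lemma ip_zero_left: "y \<in> carrier_vec n \<Longrightarrow> ip (0\<^sub>v n) y = 0" unfolding ip_def by (auto intro!: sum.neutral)

lemma zero_mat_vec: "y \<in> carrier_vec m \<Longrightarrow> 0\<^sub>m n m *\<^sub>v y = 0\<^sub>v n"
  by (rule eq_vecI) (auto simp: mult_mat_vec_def scalar_prod_def)

lemma mat_sum_psd: assumes y: "y \<in> carrier_vec n"
  and f: "\<And>j. j \<in> set js \<Longrightarrow> f j \<in> carrier_mat n n \<and> Re (ip (f j *\<^sub>v y) y) \<ge> 0"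
  shows "Re (ip (mat_sum n n f js *\<^sub>v y) y) \<ge> 0"
  using f
proof (induction js)
  case Nil
  then show ?case using y by (simp add: mat_sum_def ip_zero_left zero_mat_vec)
next
  case (Cons j js)
  have fj: "f j \<in> carrier_mat n n" "Re (ip (f j *\<^sub>v y) y) \<ge> 0" using Cons.prems by auto
  have ms: "mat_sum n n f js \<in> carrier_mat n n" using Cons.prems by (intro mat_sum_carrier) auto
  have IH: "Re (ip (mat_sum n n f js *\<^sub>v y) y) \<ge> 0" using Cons by auto
  have "mat_sum n n f (j # js) *\<^sub>v y = f j *\<^sub>v y + mat_sum n n f js *\<^sub>v y"
    unfolding mat_sum_cons by (rule add_mult_distrib_mat_vec[OF fj(1) ms y])
  then have "ip (mat_sum n n f (j # js) *\<^sub>v y) y = ip (f j *\<^sub>v y) y + ip (mat_sum n n f js *\<^sub>v y) y"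
    using fj ms y by (simp add: ip_add_left[of _ n])
  then show ?case using fj IH by simp
qed

lemma nsq_diff: assumes x: "x \<in> carrier_vec n" and w: "w \<in> carrier_vec n"
  shows "nsq (x - w) \<ge> (sqrt (nsq x) - sqrt (nsq w))\<^sup>2"
proof -
  have E: "ip (x - w) (x - w) = ip x x - ip x w - (ip w x - ip w w)"
    using x w by (simp add: ip_minus_left[of _ n] ip_minus_right[of _ n])
  have "Re (ip (x - w) (x - w)) = nsq x - Re (ip x w) - Re (ip w x) + nsq w"
    unfolding E by (simp add: Re_ip_self)
  then have "nsq (x - w) = nsq x - Re (ip x w) - Re (ip w x) + nsq w"
    by (simp add: Re_ip_self)
  moreover have "Re (ip w x) = Re (ip x w)" using ip_cnj[OF x w] by simp
  moreover have "Re (ip x w) \<le> sqrt (nsq x) * sqrt (nsq w)"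
  proof -
    have "(cmod (ip x w))\<^sup>2 \<le> nsq x * nsq w" using x w by (intro CS) auto
    then have "cmod (ip x w) \<le> sqrt (nsq x * nsq w)" by (simp add: real_le_rsqrt)
    then show ?thesis using complex_Re_le_cmod[of "ip x w"] by (simp add: real_sqrt_mult)
  qed
  moreover have "(sqrt (nsq x) - sqrt (nsq w))\<^sup>2 = nsq x + nsq w - 2 * (sqrt (nsq x) * sqrt (nsq w))"
    using nsq_ge0[of x] nsq_ge0[of w] by (simp add: power2_eq_square algebra_simps)
  ultimately show ?thesis by linarith
qed

lemma scalar_final:
  fixes a b c s Y :: real
  assumes c: "c > 0" and s: "s > 0" and bY: "b\<^sup>2 \<le> c * Y"
  shows "s / (c + s) * a\<^sup>2 \<le> (a - b)\<^sup>2 + s * Y"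
proof -
  have "(c + s) * ((a - b)\<^sup>2 + s * (b\<^sup>2 / c)) - s * a\<^sup>2 = (c * a - (c + s) * b)\<^sup>2 / c"
    using c by (simp add: field_simps power2_eq_square)
  also have "\<dots> \<ge> 0" using c by simp
  finally have "s * a\<^sup>2 \<le> (c + s) * ((a - b)\<^sup>2 + s * (b\<^sup>2 / c))" by simp
  then have "s / (c + s) * a\<^sup>2 \<le> (a - b)\<^sup>2 + s * (b\<^sup>2 / c)"
    using c s by (simp add: field_simps)
  also have "\<dots> \<le> (a - b)\<^sup>2 + s * Y"
    using bY c s by (simp add: field_simps)
  finally show ?thesis .
qed



lemma herm_bound: assumes H: "H \<in> carrier_mat N M" and y: "y \<in> carrier_vec N"
  and kap: "sigma_max (herm H * H) \<le> kappa" and kp: "kappa > 0"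
  shows "nsq (herm H *\<^sub>v y) \<le> kappa * nsq y"
proof -
  define z where "z = herm H *\<^sub>v y"
  have hH: "herm H \<in> carrier_mat M N" using H by simp
  have z: "z \<in> carrier_vec M" unfolding z_def using mult_mat_vec_carrier[OF hH y] .
  have Hz: "H *\<^sub>v z \<in> carrier_vec N" using mult_mat_vec_carrier[OF H z] .
  have "nsq (H *\<^sub>v z) \<le> sigma_max (herm H * H) * nsq z" using KL[OF H z] .
  also have "\<dots> \<le> kappa * nsq z" using kap nsq_ge0[of z] by (rule mult_right_mono)
  finally have k1: "nsq (H *\<^sub>v z) \<le> kappa * nsq z" .
  have "ip z z = ip y (herm (herm H) *\<^sub>v z)" unfolding z_def[of] using ip_adj[OF hH y z] z_def by simp
  then have "ip z z = ip y (H *\<^sub>v z)" by simp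
  then have "cmod (ip y (H *\<^sub>v z)) = cmod (complex_of_real (nsq z))" by (simp add: ip_self)
  then have "cmod (ip y (H *\<^sub>v z)) = nsq z" using nsq_ge0[of z] by simp
  then have "(nsq z)\<^sup>2 = (cmod (ip y (H *\<^sub>v z)))\<^sup>2" by simp
  also have "\<dots> \<le> nsq y * nsq (H *\<^sub>v z)" using y Hz H by (intro CS) auto
  also have "\<dots> \<le> nsq y * (kappa * nsq z)" using k1 nsq_ge0[of y] by (rule mult_left_mono)
  finally have sq: "(nsq z)\<^sup>2 \<le> nsq y * (kappa * nsq z)" .
  show ?thesis
  proof (cases "nsq z = 0")
    case True then show ?thesis using kp nsq_ge0[of y] by (simp add: z_def)
  next
    case False
    then have "nsq z > 0" using nsq_ge0[of z] by simp
    then show ?thesis using sq unfolding z_def[symmetric]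
      by (simp add: power2_eq_square algebra_simps)
  qed
qed



lemma main_k:
  fixes H U :: "complex mat" and V :: "nat \<Rightarrow> complex mat" and js :: "nat list"
  assumes d: "d \<ge> 1" and H: "H \<in> carrier_mat N M" and U: "U \<in> carrier_mat N d"
    and Vk: "V k \<in> carrier_mat M d" and Vj: "\<And>j. j \<in> set js \<Longrightarrow> V j \<in> carrier_mat M d"
    and s: "s > 0" and P: "P > 0" and kp: "kappa > 0"
    and hb: "\<And>y. y \<in> carrier_vec N \<Longrightarrow> nsq (herm H *\<^sub>v y) \<le> kappa * nsq y"
    and tr: "Re (mtrace (V k * herm (V k))) \<le> P"
  shows "lambda_min
      ((1\<^sub>m d - herm U * H * V k) * herm (1\<^sub>m d - herm U * H * V k)
       + herm U * (mat_sum N N (\<lambda>j. H * V j * herm (V j) * herm H) js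
                       + complex_of_real s \<cdot>\<^sub>m 1\<^sub>m N) * U)
    \<ge> s / (P * kappa + s)"
proof -
  define F where "F = 1\<^sub>m d - herm U * H * V k"
  define S where "S = mat_sum N N (\<lambda>j. H * V j * herm (V j) * herm H) js"
  define T where "T = S + complex_of_real s \<cdot>\<^sub>m 1\<^sub>m N"
  define E where "E = F * herm F + herm U * T * U"
  have hU: "herm U \<in> carrier_mat d N" using U by simp
  have hH: "herm H \<in> carrier_mat M N" using H by simp
  have hV: "herm (V k) \<in> carrier_mat d M" using Vk by simp
  have UHV: "herm U * H * V k \<in> carrier_mat d d" using hU H Vk by simp
  have F: "F \<in> carrier_mat d d" unfolding F_def by (rule minus_carrier_mat[OF UHV])
  have fj: "H * V j * herm (V j) * herm H \<in> carrier_mat N N \<and>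
      Re (ip ((H * V j * herm (V j) * herm H) *\<^sub>v y) y) \<ge> 0" if j: "j \<in> set js" and y: "y \<in> carrier_vec N" for j y
  proof -
    have HV: "H * V j \<in> carrier_mat N d" using H Vj[OF j] by simp
    have eq: "H * V j * herm (V j) * herm H = (H * V j) * herm (H * V j)"
      using H Vj[OF j] by (simp add: herm_mult[of _ N M _ d] assoc_mult_mat[of _ N d _ M _ N])
    show ?thesis unfolding eq using HV y ip_AAh[OF HV y] nsq_ge0 by simp
  qed
  have S: "S \<in> carrier_mat N N" unfolding S_def using fj[of _ "0\<^sub>v N"] by (intro mat_sum_carrier) auto
  have T: "T \<in> carrier_mat N N" unfolding T_def using S by simp
  have FF: "F * herm F \<in> carrier_mat d d" by (rule mult_carrier_mat[OF F herm_carrier[OF F]])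
  have UTU: "herm U * T * U \<in> carrier_mat d d" by (rule mult_carrier_mat[OF mult_carrier_mat[OF hU T] U])
  have E: "E \<in> carrier_mat d d" unfolding E_def by (rule add_carrier_mat[OF UTU])
  have key: "Re e \<ge> s / (P * kappa + s)" if ev: "eigenvalue E e" for e
  proof -
    obtain x where x: "x \<in> carrier_vec d" "x \<noteq> 0\<^sub>v d" "E *\<^sub>v x = e \<cdot>\<^sub>v x"
      using ev E unfolding eigenvalue_def eigenvector_def by auto
    have X: "nsq x > 0" using nsq_pos x by blast
    define y where "y = U *\<^sub>v x"
    have y: "y \<in> carrier_vec N" unfolding y_def using U x by simp
    define w where "w = herm (V k) *\<^sub>v (herm H *\<^sub>v y)"
    have hHy: "herm H *\<^sub>v y \<in> carrier_vec M" using hH y by simp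
    have w: "w \<in> carrier_vec d" unfolding w_def using hV hHy by simp
    have hFx: "herm F *\<^sub>v x = x - w"
    proof -
      have UH: "herm U * H \<in> carrier_mat d M" using hU H by simp
      have hUH: "herm (herm U * H) = herm H * U" using herm_mult[OF hU H] by simp
      have "herm F = 1\<^sub>m d - herm (V k) * (herm H * U)"
        unfolding F_def herm_minus[OF one_carrier_mat UHV] herm_one herm_mult[OF UH Vk] hUH ..
      moreover have HU: "herm H * U \<in> carrier_mat M d" using hH U by simp
      moreover have "herm (V k) * (herm H * U) \<in> carrier_mat d d" using hV HU by simp
      ultimately have "herm F *\<^sub>v x = x - (herm (V k) * (herm H * U)) *\<^sub>v x"
        using x by (simp add: minus_mult_distrib_mat_vec[of _ d d])
      also have "(herm (V k) * (herm H * U)) *\<^sub>v x = w"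
        unfolding w_def y_def assoc_mult_mat_vec[OF hV HU x(1)] assoc_mult_mat_vec[OF hH U x(1)] ..
      finally show ?thesis .
    qed
    have Ex: "E *\<^sub>v x = F *\<^sub>v (herm F *\<^sub>v x) + herm U *\<^sub>v (T *\<^sub>v y)"
    proof -
      have Ux: "U *\<^sub>v x \<in> carrier_vec N" using U x by simp
      show ?thesis unfolding E_def y_def add_mult_distrib_mat_vec[OF FF UTU x(1)]
        assoc_mult_mat_vec[OF F herm_carrier[OF F] x(1)]
        assoc_mult_mat_vec[OF mult_carrier_mat[OF hU T] U x(1)]
        assoc_mult_mat_vec[OF hU T Ux] ..
    qed
    have i1: "ip (F *\<^sub>v (herm F *\<^sub>v x)) x = complex_of_real (nsq (x - w))"
      using ip_AAh[OF F x(1)] unfolding assoc_mult_mat_vec[OF F herm_carrier[OF F] x(1)] hFx .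
    have i2: "ip (herm U *\<^sub>v (T *\<^sub>v y)) x = ip (T *\<^sub>v y) y"
      using ip_adj[OF hU _ x(1), of "T *\<^sub>v y"] T y by (simp add: y_def)
    have Ty: "T *\<^sub>v y = S *\<^sub>v y + complex_of_real s \<cdot>\<^sub>v y"
      unfolding T_def using S y by (simp add: add_mult_distrib_mat_vec[of _ N N] smult_mat_vec[of _ N N])
    have i3: "ip (T *\<^sub>v y) y = ip (S *\<^sub>v y) y + complex_of_real s * complex_of_real (nsq y)"
      unfolding Ty using S y by (simp add: ip_add_left[of _ N] ip_smult_left[of _ N] ip_self)
    have Spsd: "Re (ip (S *\<^sub>v y) y) \<ge> 0" unfolding S_def using y fj by (intro mat_sum_psd) auto
    have "ip (E *\<^sub>v x) x = ip (F *\<^sub>v (herm F *\<^sub>v x)) x + ip (herm U *\<^sub>v (T *\<^sub>v y)) x"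
    proof -
      have c1: "F *\<^sub>v (herm F *\<^sub>v x) \<in> carrier_vec d"
        using mult_mat_vec_carrier[OF F mult_mat_vec_carrier[OF herm_carrier[OF F] x(1)]] .
      have c2: "herm U *\<^sub>v (T *\<^sub>v y) \<in> carrier_vec d"
        using mult_mat_vec_carrier[OF hU mult_mat_vec_carrier[OF T y]] .
      show ?thesis unfolding Ex by (rule ip_add_left[OF c1 c2 x(1)])
    qed
    then have reE: "Re (ip (E *\<^sub>v x) x) \<ge> nsq (x - w) + s * nsq y"
      using i1 i2 i3 Spsd by simp
    have "ip (E *\<^sub>v x) x = e * complex_of_real (nsq x)"
      using x by (simp add: ip_smult_left[of _ d] ip_self)
    then have reE2: "Re (ip (E *\<^sub>v x) x) = Re e * nsq x" by simp
    have W: "nsq w \<le> P * kappa * nsq y"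
    proof -
      have "nsq w \<le> Re (mtrace (V k * herm (V k))) * nsq (herm H *\<^sub>v y)"
        unfolding w_def by (rule trace_bound[OF Vk hHy])
      also have "\<dots> \<le> P * nsq (herm H *\<^sub>v y)" using tr nsq_ge0 by (rule mult_right_mono)
      also have "\<dots> \<le> P * (kappa * nsq y)" using hb[OF y] P by simp
      finally show ?thesis by simp
    qed
    have "s / (P * kappa + s) * (sqrt (nsq x))\<^sup>2 \<le> (sqrt (nsq x) - sqrt (nsq w))\<^sup>2 + s * nsq y"
      using P kp s W nsq_ge0[of w] by (intro scalar_final) auto
    also have "\<dots> \<le> nsq (x - w) + s * nsq y" using nsq_diff[OF x(1) w] by simp
    also have "\<dots> \<le> Re e * nsq x" using reE reE2 by simp
    finally have "s / (P * kappa + s) * nsq x \<le> Re e * nsq x" using nsq_ge0[of x] by simp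
    then show ?thesis using X mult_le_cancel_right_pos by (metis (no_types, lifting) mult.commute)
  qed
  have fin: "finite (Re ` {e. eigenvalue E e})"
    using card_finite_spectrum(1)[OF E] unfolding spectrum_def by simp
  have ne: "Re ` {e. eigenvalue E e} \<noteq> {}"
    using spectrum_non_empty[OF E] d unfolding spectrum_def by simp
  have "s / (P * kappa + s) \<le> lambda_min E"
    unfolding lambda_min_def using fin ne key by (subst Min_ge_iff) auto
  then show ?thesis unfolding E_def T_def S_def F_def .
qed


theorem lemma1:
  fixes K M N d :: nat
    and H :: "nat \<Rightarrow> complex mat"
    and U :: "nat \<Rightarrow> complex mat"
    and V :: "nat \<Rightarrow> complex mat"
    and sigma2 :: "nat \<Rightarrow> real"
    and Pmax kappa :: real
  assumes "K \<ge> 1" and "d \<ge> 1"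
    and H_dim: "\<And>k. k < K \<Longrightarrow> H k \<in> carrier_mat N M"
    and sigma_pos: "\<And>k. k < K \<Longrightarrow> sigma2 k > 0"
    and Pmax_pos: "Pmax > 0"
    and kappa_def: "kappa = Max ((\<lambda>k. sigma_max (herm (H k) * H k)) ` {0..<K})"
    and kappa_pos: "kappa > 0"
    and U_dim: "\<And>k. k < K \<Longrightarrow> U k \<in> carrier_mat N d"
    and V_dim: "\<And>k. k < K \<Longrightarrow> V k \<in> carrier_mat M d"
    and power: "Re (\<Sum>k<K. mtrace (V k * herm (V k))) \<le> Pmax"
  shows "\<forall>k<K.
    lambda_min
      ((1\<^sub>m d - herm (U k) * H k * V k) * herm (1\<^sub>m d - herm (U k) * H k * V k)
       + herm (U k) * (mat_sum N N (\<lambda>j. H k * V j * herm (V j) * herm (H k))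
                          (filter (\<lambda>j. j \<noteq> k) [0..<K])
                       + complex_of_real (sigma2 k) \<cdot>\<^sub>m 1\<^sub>m N) * U k)
    \<ge> sigma2 k / (Pmax * kappa + sigma2 k)"
  proof (intro allI impI)
  fix k assume k: "k < K"
  have d: "d \<ge> 1" by fact
  have Hk: "H k \<in> carrier_mat N M" using H_dim[OF k] .
  have Uk: "U k \<in> carrier_mat N d" using U_dim[OF k] .
  have Vk: "V k \<in> carrier_mat M d" using V_dim[OF k] .
  have Vj: "V j \<in> carrier_mat M d" if "j \<in> set (filter (\<lambda>j. j \<noteq> k) [0..<K])" for j
    using V_dim that by simp
  have kap: "sigma_max (herm (H k) * H k) \<le> kappa"
    unfolding kappa_def using k by (intro Max_ge) auto
  have hb: "nsq (herm (H k) *\<^sub>v y) \<le> kappa * nsq y" if "y \<in> carrier_vec N" for y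
    by (rule herm_bound[OF Hk that kap kappa_pos])
  have "Re (mtrace (V k * herm (V k))) \<le> (\<Sum>j<K. Re (mtrace (V j * herm (V j))))"
    using k V_dim tr_nonneg by (intro member_le_sum) auto
  also have "\<dots> = Re (\<Sum>k<K. mtrace (V k * herm (V k)))" by (simp add: Re_sum)
  also have "\<dots> \<le> Pmax" by (rule power)
  finally have tr: "Re (mtrace (V k * herm (V k))) \<le> Pmax" .
  show "lambda_min
      ((1\<^sub>m d - herm (U k) * H k * V k) * herm (1\<^sub>m d - herm (U k) * H k * V k)
       + herm (U k) * (mat_sum N N (\<lambda>j. H k * V j * herm (V j) * herm (H k))
                          (filter (\<lambda>j. j \<noteq> k) [0..<K])
                       + complex_of_real (sigma2 k) \<cdot>\<^sub>m 1\<^sub>m N) * U k)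
    \<ge> sigma2 k / (Pmax * kappa + sigma2 k)"
    by (rule main_k[where H="H k" and U="U k" and V=V and k=k and js="filter (\<lambda>j. j \<noteq> k) [0..<K]"
          and s="sigma2 k" and P=Pmax and kappa=kappa and d=d and N=N and M=M,
          OF d Hk Uk Vk Vj sigma_pos[OF k] Pmax_pos kappa_pos hb tr])
qed

end
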